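(* If $T\in\mathcal{T}_3$ is a tree with $n\ge 30$ vertices, then either there is an edge $e$ of $T$ with $2\alpha(T,e)\ge n\,\bar{\alpha}(T,e)$, or there is an internal vertex $v$ of $T$ with $2\alpha(T,v)\ge n\,\bar{\alpha}(T,v)$.
   Context: A leaf is a vertex of degree at most 1; an internal vertex has degree at least 2. $\mathcal{T}_3$ is the set of finite trees with at least one internal vertex in which every internal vertex has degree at least 3. A subtree is a nonempty vertex set inducing a connected subgraph. For a vertex $v$, $\alpha(T,v)$ and $\bar{\alpha}(T,v)$ are the numbers of subtrees of $T$ containing and not containing $v$, respectively; for an edge $e$, $\alpha(T,e)$ and $\bar{\alpha}(T,e)$ are the numbers of subtrees containing and not containing $e$ (i.e. containing both endpoints of $e$, or not). *)

theory Defs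
  imports Main
begin

definition simple_graph :: "'a set \<Rightarrow> 'a set set \<Rightarrow> bool" where
  "simple_graph V E \<longleftrightarrow> finite V \<and> (\<forall>e\<in>E. \<exists>u v. e = {u, v} \<and> u \<noteq> v \<and> u \<in> V \<and> v \<in> V)"

definition adj_in :: "'a set set \<Rightarrow> 'a set \<Rightarrow> 'a \<Rightarrow> 'a \<Rightarrow> bool" where
  "adj_in E S u v \<longleftrightarrow> u \<in> S \<and> v \<in> S \<and> {u, v} \<in> E"

definition induces_connected :: "'a set set \<Rightarrow> 'a set \<Rightarrow> bool" where
  "induces_connected E S \<longleftrightarrow> (\<forall>x\<in>S. \<forall>y\<in>S. (adj_in E S)\<^sup>*\<^sup>* x y)"

definition is_tree :: "'a set \<Rightarrow> 'a set set \<Rightarrow> bool" where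
  "is_tree V E \<longleftrightarrow> simple_graph V E \<and> V \<noteq> {} \<and> induces_connected E V \<and> card E = card V - 1"

definition degree :: "'a set set \<Rightarrow> 'a \<Rightarrow> nat" where
  "degree E v = card {e\<in>E. v \<in> e}"

definition internal :: "'a set set \<Rightarrow> 'a \<Rightarrow> bool" where
  "internal E v \<longleftrightarrow> degree E v \<ge> 2"

definition in_T3 :: "'a set \<Rightarrow> 'a set set \<Rightarrow> bool" where
  "in_T3 V E \<longleftrightarrow> is_tree V E \<and> (\<exists>v\<in>V. internal E v) \<and> (\<forall>v\<in>V. internal E v \<longrightarrow> degree E v \<ge> 3)"

definition subtrees :: "'a set \<Rightarrow> 'a set set \<Rightarrow> 'a set set" where
  "subtrees V E = {S. S \<subseteq> V \<and> S \<noteq> {} \<and> induces_connected E S}"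

definition alpha_v :: "'a set \<Rightarrow> 'a set set \<Rightarrow> 'a \<Rightarrow> nat" where
  "alpha_v V E v = card {S\<in>subtrees V E. v \<in> S}"

definition alpha_bar_v :: "'a set \<Rightarrow> 'a set set \<Rightarrow> 'a \<Rightarrow> nat" where
  "alpha_bar_v V E v = card {S\<in>subtrees V E. v \<notin> S}"

definition alpha_e :: "'a set \<Rightarrow> 'a set set \<Rightarrow> 'a set \<Rightarrow> nat" where
  "alpha_e V E e = card {S\<in>subtrees V E. e \<subseteq> S}"

definition alpha_bar_e :: "'a set \<Rightarrow> 'a set set \<Rightarrow> 'a set \<Rightarrow> nat" where
  "alpha_bar_e V E e = card {S\<in>subtrees V E. \<not> e \<subseteq> S}"

end

theory Submission
  imports Defs "HOL-Library.FuncSet"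
begin


lemma adj_in_sym: "adj_in E S a b \<Longrightarrow> adj_in E S b a"
  unfolding adj_in_def by (simp add: insert_commute)

lemma reach_sym: "(adj_in E S)\<^sup>*\<^sup>* a b \<Longrightarrow> (adj_in E S)\<^sup>*\<^sup>* b a"
proof (induction rule: rtranclp_induct)
  case base then show ?case by simp
next
  case (step y z)
  then show ?case using adj_in_sym by (metis converse_rtranclp_into_rtranclp)
qed

lemma reach_in: "(adj_in E X)\<^sup>*\<^sup>* a w \<Longrightarrow> a \<in> X \<Longrightarrow> w \<in> X"
  by (induction rule: rtranclp_induct) (auto simp: adj_in_def)

lemma adj_in_mono: "A \<subseteq> B \<Longrightarrow> adj_in E A x y \<Longrightarrow> adj_in E B x y"
  unfolding adj_in_def by auto

lemma reach_mono: "A \<subseteq> B \<Longrightarrow> (adj_in E A)\<^sup>*\<^sup>* x y \<Longrightarrow> (adj_in E B)\<^sup>*\<^sup>* x y"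
  by (metis adj_in_mono mono_rtranclp)

lemma reach_within: "(adj_in E X)\<^sup>*\<^sup>* a w \<Longrightarrow> (adj_in E {y. (adj_in E X)\<^sup>*\<^sup>* a y})\<^sup>*\<^sup>* a w"
proof (induction rule: rtranclp_induct)
  case base then show ?case by simp
next
  case (step y z)
  have z: "(adj_in E X)\<^sup>*\<^sup>* a z" using step.hyps by (rule rtranclp.rtrancl_into_rtrancl)
  have "adj_in E {y. (adj_in E X)\<^sup>*\<^sup>* a y} y z"
    using step.hyps z unfolding adj_in_def by auto
  then show ?case using step by (meson rtranclp.rtrancl_into_rtrancl)
qed

lemma conn_card:
  assumes sg: "simple_graph V E" and x0: "x0 \<in> V"
    and conn: "\<forall>y\<in>V. (adj_in E V)\<^sup>*\<^sup>* y x0"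
  shows "card V \<le> card E + 1"
proof -
  have finV: "finite V" using sg unfolding simple_graph_def by auto
  have EP: "E \<subseteq> Pow V" using sg unfolding simple_graph_def by auto
  have finE: "finite E" using finite_subset[OF EP] finV by simp
  let ?R = "adj_in E V"
  define dist where "dist y = (LEAST k. (?R ^^ k) y x0)" for y
  have par: "\<exists>p. ?R y p \<and> dist p < dist y" if "y \<in> V" "y \<noteq> x0" for y
  proof -
    have rr: "?R\<^sup>*\<^sup>* y x0" using conn that(1) by (rule bspec)
    obtain k where k: "(?R ^^ k) y x0" using rtranclp_imp_relpowp[OF rr] by (elim exE)
    have dk: "(?R ^^ dist y) y x0" unfolding dist_def using k by (rule LeastI)
    have "dist y \<noteq> 0"
    proof
      assume "dist y = 0"
      with dk have "y = x0" by (simp only: relpowp.simps(1))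
      with that show False by simp
    qed
    then obtain j where j: "dist y = Suc j" using not0_implies_Suc by blast
    have sj: "(?R ^^ Suc j) y x0" using dk j by simp
    obtain p where p: "?R y p" "(?R ^^ j) p x0" using relpowp_Suc_D2[OF sj] by (elim exE conjE)
    have "dist p \<le> j" unfolding dist_def using p(2) by (rule Least_le)
    then have "dist p < dist y" using j by simp
    then show ?thesis using p(1) by blast
  qed
  define pa where "pa y = (SOME p. ?R y p \<and> dist p < dist y)" for y
  have pa: "?R y (pa y) \<and> dist (pa y) < dist y" if "y \<in> V" "y \<noteq> x0" for y
    unfolding pa_def using someI_ex[OF par[OF that]] .
  define f where "f y = {y, pa y}" for y
  have inj: "inj_on f (V - {x0})"
  proof (rule inj_onI)
    fix y y' assume y: "y \<in> V - {x0}" and y': "y' \<in> V - {x0}" and eq: "f y = f y'"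
    show "y = y'"
    proof (rule ccontr)
      assume ne: "y \<noteq> y'"
      have "{y, pa y} = {y', pa y'}" using eq unfolding f_def .
      then have e: "y = pa y' \<and> pa y = y'" using ne unfolding doubleton_eq_iff by blast
      have d1: "dist (pa y) < dist y" using pa[of y] y by blast
      have d2: "dist (pa y') < dist y'" using pa[of y'] y' by blast
      from e have e1: "y = pa y'" and e2: "pa y = y'" by auto
      have "dist y' < dist y" using d1 unfolding e2 .
      moreover have "dist y < dist y'" using d2 unfolding e1[symmetric] .
      ultimately show False by simp
    qed
  qed
  have sub: "f ` (V - {x0}) \<subseteq> E"
  proof
    fix e assume "e \<in> f ` (V - {x0})"
    then obtain y where y: "y \<in> V - {x0}" "e = f y" by blast
    have "?R y (pa y)" using pa[of y] y by blast
    then show "e \<in> E" using y unfolding f_def adj_in_def by simp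
  qed
  have "card (V - {x0}) \<le> card E" using card_inj_on_le[OF inj sub finE] .
  then show ?thesis using x0 finV by (simp add: card_Diff_singleton)
qed


locale tree =
  fixes V :: "'a set" and E :: "'a set set"
  assumes tr: "is_tree V E"
begin

lemma sg: "simple_graph V E" using tr unfolding is_tree_def by blast
lemma finV: "finite V" using sg unfolding simple_graph_def by blast
lemma conn: "induces_connected E V" using tr unfolding is_tree_def by blast
lemma cardE: "card E = card V - 1" using tr unfolding is_tree_def by blast
lemma EP: "E \<subseteq> Pow V" using sg unfolding simple_graph_def by auto
lemma finE: "finite E" using finite_subset[OF EP] finV by simp

lemma edge: assumes "{a,b} \<in> E" shows "a \<in> V" "b \<in> V" "a \<noteq> b"
proof -
  obtain u v where uv: "{a,b} = {u,v}" "u \<noteq> v" "u \<in> V" "v \<in> V"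
    using sg assms unfolding simple_graph_def by blast
  from uv(1) have "(a = u \<and> b = v) \<or> (a = v \<and> b = u)" unfolding doubleton_eq_iff .
  then show "a \<in> V" "b \<in> V" "a \<noteq> b" using uv by auto
qed

lemma edgeE: assumes "e \<in> E" obtains u v where "e = {u,v}" "u \<noteq> v" "u \<in> V" "v \<in> V"
  using sg assms unfolding simple_graph_def by blast

lemma bridge:
  assumes bc: "{b,c} \<in> E"
  shows "\<not> (adj_in (E - {{b,c}}) V)\<^sup>*\<^sup>* c b"
proof
  assume p: "(adj_in (E - {{b,c}}) V)\<^sup>*\<^sup>* c b"
  let ?E' = "E - {{b,c}}"
  have st: "(adj_in ?E' V)\<^sup>*\<^sup>* x y" if a: "adj_in E V x y" for x y
  proof (cases "{x,y} = {b,c}")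
    case True
    then have "(x = b \<and> y = c) \<or> (x = c \<and> y = b)" unfolding doubleton_eq_iff .
    then show ?thesis
    proof
      assume "x = b \<and> y = c" then show ?thesis using reach_sym[OF p] by simp
    next
      assume "x = c \<and> y = b" then show ?thesis using p by simp
    qed
  next
    case False
    then have "adj_in ?E' V x y" using a unfolding adj_in_def by simp
    then show ?thesis by (rule r_into_rtranclp)
  qed
  have lift: "(adj_in ?E' V)\<^sup>*\<^sup>* x y" if a: "(adj_in E V)\<^sup>*\<^sup>* x y" for x y
    using a
  proof (induction rule: rtranclp_induct)
    case base then show ?case by simp
  next
    case (step y z) then show ?case using st[of y z] by (meson rtranclp_trans)
  qed
  have bV: "b \<in> V" and cV: "c \<in> V" and bcne: "b \<noteq> c" using edge[OF bc] by auto
  have c2: "\<forall>y\<in>V. (adj_in ?E' V)\<^sup>*\<^sup>* y b"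
  proof
    fix y assume "y \<in> V"
    then have "(adj_in E V)\<^sup>*\<^sup>* y b" using conn bV unfolding induces_connected_def by blast
    then show "(adj_in ?E' V)\<^sup>*\<^sup>* y b" by (rule lift)
  qed
  have sg': "simple_graph V ?E'" using sg unfolding simple_graph_def by blast
  have "card V \<le> card ?E' + 1" using conn_card[OF sg' bV c2] .
  moreover have "card ?E' = card E - 1" using bc finE by (simp add: card_Diff_singleton)
  moreover have "card V \<ge> 2"
  proof -
    have "{b,c} \<subseteq> V" using bV cV by simp
    then have "card {b,c} \<le> card V" using finV by (rule card_mono[rotated])
    then show ?thesis using bcne by simp
  qed
  ultimately show False using cardE by simp
qed

definition nb :: "'a \<Rightarrow> 'a set" where "nb v = {u. {v,u} \<in> E}"

definition Dset :: "'a \<Rightarrow> 'a \<Rightarrow> 'a set" where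
  "Dset b c = {w. (adj_in E (V - {b}))\<^sup>*\<^sup>* c w}"

lemma nb_sym: "u \<in> nb v \<longleftrightarrow> v \<in> nb u" unfolding nb_def by (simp add: insert_commute)

lemma nbV: "nb v \<subseteq> V"
proof
  fix u assume "u \<in> nb v"
  then have "{v,u} \<in> E" unfolding nb_def by simp
  then show "u \<in> V" by (rule edge(2))
qed
lemma fin_nb: "finite (nb v)" using nbV finV by (rule finite_subset)

lemma avoid:
  assumes "(adj_in E (V - {b}))\<^sup>*\<^sup>* c w"
  shows "(adj_in (E - {{b,c}}) V)\<^sup>*\<^sup>* c w"
proof -
  have h: "adj_in (E - {{b,c}}) V x y" if "adj_in E (V - {b}) x y" for x y
  proof -
    have "x \<noteq> b" "y \<noteq> b" using that unfolding adj_in_def by auto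
    then have "{x,y} \<noteq> {b,c}" unfolding doubleton_eq_iff by blast
    then show ?thesis using that unfolding adj_in_def by simp
  qed
  show ?thesis using assms
  proof (induction rule: rtranclp_induct)
    case base then show ?case by simp
  next
    case (step y z) then show ?case using h[of y z] by (meson rtranclp.rtrancl_into_rtrancl)
  qed
qed

lemma D1: assumes "{b,c} \<in> E" shows "c \<in> Dset b c" "Dset b c \<subseteq> V - {b}"
proof -
  show "c \<in> Dset b c" unfolding Dset_def by simp
  have "c \<in> V - {b}" using edge[OF assms] by auto
  then show "Dset b c \<subseteq> V - {b}" unfolding Dset_def using reach_in[of E "V - {b}" c] by blast
qed

lemma D2:
  assumes bc: "{b,c} \<in> E" and p: "p \<in> Dset b c" and pq: "{p,q} \<in> E" and q: "q \<notin> Dset b c"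
  shows "q = b \<and> p = c"
proof -
  have pr: "(adj_in E (V - {b}))\<^sup>*\<^sup>* c p" using p unfolding Dset_def by simp
  have pV: "p \<in> V - {b}" using D1[OF bc] p by blast
  have qV: "q \<in> V" using edge[OF pq] by simp
  have qb: "q = b"
  proof (rule ccontr)
    assume "q \<noteq> b"
    then have "adj_in E (V - {b}) p q" using pV qV pq unfolding adj_in_def by simp
    then have "q \<in> Dset b c" using pr unfolding Dset_def by simp
    then show False using q by simp
  qed
  have pc: "p = c"
  proof (rule ccontr)
    assume pc: "p \<noteq> c"
    have r1: "(adj_in (E - {{b,c}}) V)\<^sup>*\<^sup>* c p" using avoid[OF pr] .
    have "{p,b} \<noteq> {b,c}" using pc pV unfolding doubleton_eq_iff by blast
    then have "adj_in (E - {{b,c}}) V p b" using pq qb pV edge[OF bc] unfolding adj_in_def by auto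
    then have "(adj_in (E - {{b,c}}) V)\<^sup>*\<^sup>* c b" using r1 by simp
    then show False using bridge[OF bc] by simp
  qed
  show ?thesis using qb pc by simp
qed

lemma D3:
  assumes bc: "{b,c} \<in> E" and bc': "{b,c'} \<in> E" and ne: "c \<noteq> c'"
  shows "Dset b c \<inter> Dset b c' = {}"
proof (rule ccontr)
  assume "Dset b c \<inter> Dset b c' \<noteq> {}"
  then obtain w where w: "w \<in> Dset b c" "w \<in> Dset b c'" by blast
  have "(adj_in E (V - {b}))\<^sup>*\<^sup>* c w" "(adj_in E (V - {b}))\<^sup>*\<^sup>* c' w"
    using w unfolding Dset_def by auto
  then have "(adj_in E (V - {b}))\<^sup>*\<^sup>* c c'" using reach_sym by (metis rtranclp_trans)
  then have c'D: "c' \<in> Dset b c" unfolding Dset_def by simp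
  have "b \<notin> Dset b c" using D1[OF bc] by blast
  moreover have "{c',b} \<in> E" using bc' by (simp add: insert_commute)
  ultimately have "b = b \<and> c' = c" using D2[OF bc c'D] by blast
  then show False using ne by simp
qed

lemma D4:
  assumes v: "v \<in> V"
  shows "V = insert v (\<Union>u\<in>nb v. Dset v u)"
proof
  show "insert v (\<Union>u\<in>nb v. Dset v u) \<subseteq> V"
  proof -
    have "Dset v u \<subseteq> V" if "u \<in> nb v" for u
      using D1[of v u] that unfolding nb_def by blast
    then show ?thesis using v by blast
  qed
next
  show "V \<subseteq> insert v (\<Union>u\<in>nb v. Dset v u)"
  proof
    fix w assume w: "w \<in> V"
    have "(adj_in E V)\<^sup>*\<^sup>* w v" using conn w v unfolding induces_connected_def by blast
    then show "w \<in> insert v (\<Union>u\<in>nb v. Dset v u)"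
    proof (induction rule: converse_rtranclp_induct)
      case base then show ?case by simp
    next
      case (step y z)
      have yz: "{y,z} \<in> E" "y \<in> V" using step.hyps(1) unfolding adj_in_def by auto
      show ?case
      proof (cases "y = v")
        case True then show ?thesis by simp
      next
        case yv: False
        show ?thesis
        proof (cases "z = v")
          case True
          then have "y \<in> nb v" using yz unfolding nb_def by (simp add: insert_commute)
          moreover have "y \<in> Dset v y" unfolding Dset_def by simp
          ultimately show ?thesis by blast
        next
          case False
          then obtain u where u: "u \<in> nb v" "z \<in> Dset v u" using step.IH by blast
          have zV: "z \<in> V - {v}" using D1[of v u] u unfolding nb_def by blast
          have "adj_in E (V - {v}) z y" using yz zV yv unfolding adj_in_def by (simp add: insert_commute)
          then have "y \<in> Dset v u" using u(2) unfolding Dset_def by simp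
          then show ?thesis using u(1) by blast
        qed
      qed
    qed
  qed
qed

lemma D5:
  assumes bc: "{b,c} \<in> E"
  shows "Dset b c = insert c (\<Union>c'\<in>nb c - {b}. Dset c c')"
proof
  show "Dset b c \<subseteq> insert c (\<Union>c'\<in>nb c - {b}. Dset c c')"
  proof
    fix w assume "w \<in> Dset b c"
    then have "(adj_in E (V - {b}))\<^sup>*\<^sup>* c w" unfolding Dset_def by simp
    then show "w \<in> insert c (\<Union>c'\<in>nb c - {b}. Dset c c')"
    proof (induction rule: rtranclp_induct)
      case base then show ?case by simp
    next
      case (step y z)
      have yz: "{y,z} \<in> E" "z \<in> V" "z \<noteq> b" using step.hyps(2) unfolding adj_in_def by auto
      show ?case
      proof (cases "z = c")
        case True then show ?thesis by simp
      next
        case zc: False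
        show ?thesis
        proof (cases "y = c")
          case True
          then have "z \<in> nb c - {b}" using yz unfolding nb_def by simp
          moreover have "z \<in> Dset c z" unfolding Dset_def by simp
          ultimately show ?thesis by blast
        next
          case False
          then obtain u where u: "u \<in> nb c - {b}" "y \<in> Dset c u" using step.IH by blast
          have "adj_in E (V - {c}) y z"
            using yz zc D1[of c u] u unfolding nb_def adj_in_def by auto
          then have "z \<in> Dset c u" using u(2) unfolding Dset_def by simp
          then show ?thesis using u(1) by blast
        qed
      qed
    qed
  qed
next
  show "insert c (\<Union>c'\<in>nb c - {b}. Dset c c') \<subseteq> Dset b c"
  proof -
    have "Dset c c' \<subseteq> Dset b c" if c': "c' \<in> nb c - {b}" for c'
    proof
      fix w assume w: "w \<in> Dset c c'"
      have cc': "{c,c'} \<in> E" using c' unfolding nb_def by simp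
      have bn: "b \<notin> Dset c c'"
      proof
        assume bD: "b \<in> Dset c c'"
        have "c \<notin> Dset c c'" using D1[OF cc'] by blast
        moreover have "{b,c} \<in> E" using bc .
        ultimately have "c = c \<and> b = c'" using D2[OF cc' bD] by blast
        then show False using c' by simp
      qed
      have r: "(adj_in E (V - {c}))\<^sup>*\<^sup>* c' w" using w unfolding Dset_def by simp
      have r2: "(adj_in E (Dset c c'))\<^sup>*\<^sup>* c' w" using reach_within[OF r] unfolding Dset_def .
      have "Dset c c' \<subseteq> V - {b}" using D1[OF cc'] bn by blast
      then have r3: "(adj_in E (V - {b}))\<^sup>*\<^sup>* c' w" using r2 by (rule reach_mono)
      have "adj_in E (V - {b}) c c'"
        using cc' c' edge[OF cc'] edge[OF bc] unfolding adj_in_def by auto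
      then have "(adj_in E (V - {b}))\<^sup>*\<^sup>* c w" using r3 by (rule converse_rtranclp_into_rtranclp)
      then show "w \<in> Dset b c" unfolding Dset_def by simp
    qed
    then show ?thesis using D1[OF bc] by blast
  qed
qed

lemma D6: "induces_connected E (Dset b c)"
  unfolding induces_connected_def
proof (intro ballI)
  fix x y assume x: "x \<in> Dset b c" and y: "y \<in> Dset b c"
  have "(adj_in E (Dset b c))\<^sup>*\<^sup>* c x" "(adj_in E (Dset b c))\<^sup>*\<^sup>* c y"
    using reach_within x y unfolding Dset_def by auto
  then show "(adj_in E (Dset b c))\<^sup>*\<^sup>* x y" using reach_sym by (metis rtranclp_trans)
qed

lemma finD: "finite (Dset b c)"
proof -
  have "Dset b c \<subseteq> insert c V"
  proof
    fix w assume "w \<in> Dset b c"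
    then have r: "(adj_in E (V - {b}))\<^sup>*\<^sup>* c w" unfolding Dset_def by simp
    have "w = c \<or> w \<in> V" using r
    proof (induction rule: rtranclp_induct)
      case base then show ?case by simp
    next
      case (step y z) then show ?case unfolding adj_in_def by blast
    qed
    then show "w \<in> insert c V" by blast
  qed
  moreover have "finite (insert c V)" using finV by simp
  ultimately show ?thesis by (rule finite_subset)
qed

end


definition sub :: "'a set set \<Rightarrow> 'a set \<Rightarrow> 'a set set" where
  "sub E X = {S. S \<subseteq> X \<and> S \<noteq> {} \<and> induces_connected E S}"

lemma fin_sub: "finite X \<Longrightarrow> finite (sub E X)"
proof -
  assume "finite X"
  moreover have "sub E X \<subseteq> Pow X" unfolding sub_def by blast
  ultimately show ?thesis by (simp add: finite_subset)
qed

lemma conn_via: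
  assumes "\<forall>w\<in>S. (adj_in E S)\<^sup>*\<^sup>* w x"
  shows "induces_connected E S"
  unfolding induces_connected_def
proof (intro ballI)
  fix a b assume "a \<in> S" "b \<in> S"
  then have "(adj_in E S)\<^sup>*\<^sup>* a x" "(adj_in E S)\<^sup>*\<^sup>* b x" using assms by auto
  then show "(adj_in E S)\<^sup>*\<^sup>* a b" using reach_sym by (metis rtranclp_trans)
qed

locale decomp =
  fixes E :: "'a set set" and C :: "'a set" and R :: "'a set" and x :: 'a and D :: "'a \<Rightarrow> 'a set"
  assumes finC: "finite C"
    and R: "R = insert x (\<Union>c\<in>C. D c)"
    and xn: "\<forall>c\<in>C. x \<notin> D c"
    and disj: "\<forall>c\<in>C. \<forall>c'\<in>C. c \<noteq> c' \<longrightarrow> D c \<inter> D c' = {}"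
    and cin: "\<forall>c\<in>C. c \<in> D c"
    and xc: "\<forall>c\<in>C. {x,c} \<in> E"
    and dc: "\<forall>c\<in>C. induces_connected E (D c)"
    and bd: "\<forall>c\<in>C. \<forall>p\<in>D c. \<forall>q\<in>R. {p,q} \<in> E \<longrightarrow> q \<notin> D c \<longrightarrow> q = x \<and> p = c"
    and finD: "\<forall>c\<in>C. finite (D c)"
begin

lemma key1:
  assumes S: "S \<in> sub E R" and xS: "x \<in> S" and c: "c \<in> C" and ne: "S \<inter> D c \<noteq> {}"
  shows "c \<in> S \<inter> D c" "induces_connected E (S \<inter> D c)"
proof -
  have SR: "S \<subseteq> R" and Sc: "induces_connected E S" using S unfolding sub_def by auto
  have main: "(adj_in E (S \<inter> D c))\<^sup>*\<^sup>* w c" if "w \<in> S \<inter> D c" for w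
  proof -
    have r: "(adj_in E S)\<^sup>*\<^sup>* w x" using Sc that xS unfolding induces_connected_def by blast
    have "w \<in> D c \<longrightarrow> (adj_in E (S \<inter> D c))\<^sup>*\<^sup>* w c" using r
    proof (induction rule: converse_rtranclp_induct)
      case base then show ?case using xn c by blast
    next
      case (step w y)
      show ?case
      proof
        assume wD: "w \<in> D c"
        have wy: "w \<in> S" "y \<in> S" "{w,y} \<in> E" using step.hyps(1) unfolding adj_in_def by auto
        show "(adj_in E (S \<inter> D c))\<^sup>*\<^sup>* w c"
        proof (cases "y \<in> D c")
          case True
          then have "adj_in E (S \<inter> D c) w y" using wy wD unfolding adj_in_def by simp
          then show ?thesis using step.IH True by (meson converse_rtranclp_into_rtranclp)
        next
          case False
          have "y \<in> R" using wy SR by blast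
          then have "y = x \<and> w = c" using bd c wD wy(3) False by blast
          then show ?thesis by simp
        qed
      qed
    qed
    then show ?thesis using that by blast
  qed
  obtain w where w: "w \<in> S \<inter> D c" using ne by blast
  show "c \<in> S \<inter> D c" using reach_in[OF main[OF w] w] .
  show "induces_connected E (S \<inter> D c)"
    using conn_via[of "S \<inter> D c" E c] main by blast
qed

definition F where "F c = insert {} {S \<in> sub E (D c). c \<in> S}"
definition phi where "phi S = (\<lambda>c\<in>C. S \<inter> D c)"
definition psi where "psi T = insert x (\<Union>c\<in>C. T c)"

lemma key2:
  assumes T: "T \<in> (\<Pi>\<^sub>E c\<in>C. F c)"
  shows "psi T \<in> sub E R"
proof -
  let ?S = "psi T"
  have Tc: "T c = {} \<or> (T c \<in> sub E (D c) \<and> c \<in> T c)" if "c \<in> C" for c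
  proof -
    have "T c \<in> F c" using PiE_mem[OF T that] .
    then show ?thesis unfolding F_def by blast
  qed
  have sub1: "T c \<subseteq> D c" if "c \<in> C" for c using Tc[OF that] unfolding sub_def by blast
  have "?S \<subseteq> R" unfolding psi_def R using sub1 by blast
  moreover have "?S \<noteq> {}" unfolding psi_def by simp
  moreover have "\<forall>w\<in>?S. (adj_in E ?S)\<^sup>*\<^sup>* w x"
  proof
    fix w assume "w \<in> ?S"
    then consider "w = x" | c where "c \<in> C" "w \<in> T c" unfolding psi_def by blast
    then show "(adj_in E ?S)\<^sup>*\<^sup>* w x"
    proof cases
      case 1 then show ?thesis by simp
    next
      case (2 c)
      then have tc: "T c \<in> sub E (D c)" "c \<in> T c" using Tc by auto
      have "(adj_in E (T c))\<^sup>*\<^sup>* w c" using tc 2 unfolding sub_def induces_connected_def by blast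
      moreover have "T c \<subseteq> ?S" using 2 unfolding psi_def by blast
      ultimately have r: "(adj_in E ?S)\<^sup>*\<^sup>* w c" by (rule reach_mono[rotated])
      have "{c,x} \<in> E" using xc 2 by (simp add: insert_commute)
      then have "adj_in E ?S c x" using tc 2 unfolding adj_in_def psi_def by blast
      then show ?thesis using r by simp
    qed
  qed
  then have "induces_connected E ?S" by (rule conn_via)
  ultimately show ?thesis unfolding sub_def by blast
qed

lemma phi_in:
  assumes S: "S \<in> sub E R" and xS: "x \<in> S"
  shows "phi S \<in> (\<Pi>\<^sub>E c\<in>C. F c)"
proof -
  have "S \<inter> D c \<in> F c" if c: "c \<in> C" for c
  proof (cases "S \<inter> D c = {}")
    case True then show ?thesis unfolding F_def by simp
  next
    case False
    from key1[OF S xS c False] show ?thesis unfolding F_def sub_def by blast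
  qed
  then show ?thesis unfolding phi_def restrict_PiE_iff by blast
qed

lemma psi_phi: assumes S: "S \<in> sub E R" and xS: "x \<in> S" shows "psi (phi S) = S"
proof -
  have SR: "S \<subseteq> insert x (\<Union>c\<in>C. D c)" using S unfolding sub_def R by blast
  have e1: "(\<Union>c\<in>C. phi S c) = (\<Union>c\<in>C. S \<inter> D c)" by (rule SUP_cong) (simp_all add: phi_def)
  have e2: "insert x (\<Union>c\<in>C. S \<inter> D c) = S" using SR xS by blast
  show ?thesis unfolding psi_def e1 e2 ..
qed

lemma phi_psi: assumes T: "T \<in> (\<Pi>\<^sub>E c\<in>C. F c)" shows "phi (psi T) = T"
proof
  fix c
  show "phi (psi T) c = T c"
  proof (cases "c \<in> C")
    case False
    have "T c = undefined" using PiE_arb[OF T False] .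
    moreover have "phi (psi T) c = undefined" unfolding phi_def using False by simp
    ultimately show ?thesis by simp
  next
    case True
    have sub1: "T c' \<subseteq> D c'" if "c' \<in> C" for c'
    proof -
      have "T c' \<in> F c'" using PiE_mem[OF T that] .
      then show ?thesis unfolding F_def sub_def by blast
    qed
    have "psi T \<inter> D c = T c"
    proof
      show "T c \<subseteq> psi T \<inter> D c" using sub1[OF True] True unfolding psi_def by blast
      show "psi T \<inter> D c \<subseteq> T c"
      proof
        fix w assume w: "w \<in> psi T \<inter> D c"
        then have "w \<noteq> x" using xn True by blast
        then obtain c' where c': "c' \<in> C" "w \<in> T c'" using w unfolding psi_def by blast
        have "w \<in> D c'" using sub1[OF c'(1)] c'(2) by blast
        have "c' = c"
        proof (rule ccontr)
          assume ne: "c' \<noteq> c"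
          have "D c' \<inter> D c = {}" using disj c'(1) True ne by blast
          then show False using \<open>w \<in> D c'\<close> w by blast
        qed
        then show "w \<in> T c" using c'(2) by simp
      qed
    qed
    moreover have "phi (psi T) c = psi T \<inter> D c" unfolding phi_def using True by (rule restrict_apply')
    ultimately show ?thesis by simp
  qed
qed

lemma count_in: "card {S \<in> sub E R. x \<in> S} = (\<Prod>c\<in>C. 1 + card {S \<in> sub E (D c). c \<in> S})"
proof -
  have "bij_betw phi {S \<in> sub E R. x \<in> S} (\<Pi>\<^sub>E c\<in>C. F c)"
  proof (rule bij_betw_byWitness[where f'=psi])
    show "\<forall>a\<in>{S \<in> sub E R. x \<in> S}. psi (phi a) = a"
    proof
      fix a assume "a \<in> {S \<in> sub E R. x \<in> S}"
      then have "a \<in> sub E R" "x \<in> a" by auto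
      then show "psi (phi a) = a" by (rule psi_phi)
    qed
    show "\<forall>a'\<in>(\<Pi>\<^sub>E c\<in>C. F c). phi (psi a') = a'"
    proof
      fix a assume "a \<in> (\<Pi>\<^sub>E c\<in>C. F c)"
      then show "phi (psi a) = a" by (rule phi_psi)
    qed
    show "phi ` {S \<in> sub E R. x \<in> S} \<subseteq> (\<Pi>\<^sub>E c\<in>C. F c)"
    proof
      fix b assume "b \<in> phi ` {S \<in> sub E R. x \<in> S}"
      then obtain a where a: "a \<in> sub E R" "x \<in> a" "b = phi a" by auto
      then show "b \<in> (\<Pi>\<^sub>E c\<in>C. F c)" using phi_in[OF a(1,2)] by simp
    qed
    show "psi ` (\<Pi>\<^sub>E c\<in>C. F c) \<subseteq> {S \<in> sub E R. x \<in> S}"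
    proof
      fix b assume "b \<in> psi ` (\<Pi>\<^sub>E c\<in>C. F c)"
      then obtain a where a: "a \<in> (\<Pi>\<^sub>E c\<in>C. F c)" "b = psi a" by auto
      have "x \<in> psi a" unfolding psi_def by simp
      then show "b \<in> {S \<in> sub E R. x \<in> S}" using key2[OF a(1)] a(2) by simp
    qed
  qed
  then have "card {S \<in> sub E R. x \<in> S} = card (\<Pi>\<^sub>E c\<in>C. F c)" by (rule bij_betw_same_card)
  also have "\<dots> = (\<Prod>c\<in>C. card (F c))" using finC by (rule card_PiE)
  also have "\<dots> = (\<Prod>c\<in>C. 1 + card {S \<in> sub E (D c). c \<in> S})"
  proof (rule prod.cong[OF refl])
    fix c assume c: "c \<in> C"
    have "finite (sub E (D c))" using fin_sub finD c by blast
    then have "finite {S \<in> sub E (D c). c \<in> S}" by (rule finite_subset[rotated]) blast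
    moreover have "{} \<notin> {S \<in> sub E (D c). c \<in> S}" unfolding sub_def by blast
    ultimately show "card (F c) = 1 + card {S \<in> sub E (D c). c \<in> S}" unfolding F_def
      by (simp add: card_insert_disjoint)
  qed
  finally show ?thesis .
qed

lemma count_out: "card {S \<in> sub E R. x \<notin> S} = (\<Sum>c\<in>C. card (sub E (D c)))"
proof -
  have eq: "{S \<in> sub E R. x \<notin> S} = (\<Union>c\<in>C. sub E (D c))"
  proof
    show "{S \<in> sub E R. x \<notin> S} \<subseteq> (\<Union>c\<in>C. sub E (D c))"
    proof
      fix S assume S: "S \<in> {S \<in> sub E R. x \<notin> S}"
      then have SR: "S \<subseteq> R" and Sne: "S \<noteq> {}" and Sc: "induces_connected E S" and xS: "x \<notin> S"
        unfolding sub_def by auto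
      obtain w where w: "w \<in> S" using Sne by blast
      then obtain c where c: "c \<in> C" "w \<in> D c" using SR xS unfolding R by blast
      have "S \<subseteq> D c"
      proof
        fix w' assume "w' \<in> S"
        then have "(adj_in E S)\<^sup>*\<^sup>* w w'" using Sc w unfolding induces_connected_def by blast
        then show "w' \<in> D c"
        proof (induction rule: rtranclp_induct)
          case base then show ?case using c by simp
        next
          case (step y z)
          have yz: "y \<in> S" "z \<in> S" "{y,z} \<in> E" using step.hyps(2) unfolding adj_in_def by auto
          show ?case
          proof (rule ccontr)
            assume "z \<notin> D c"
            moreover have "z \<in> R" using yz SR by blast
            ultimately have "z = x" using bd c step.IH yz(3) by blast
            then show False using xS yz by simp
          qed
        qed
      qed
      then show "S \<in> (\<Union>c\<in>C. sub E (D c))" using c Sne Sc unfolding sub_def by blast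
    qed
    show "(\<Union>c\<in>C. sub E (D c)) \<subseteq> {S \<in> sub E R. x \<notin> S}"
      unfolding sub_def R using xn by blast
  qed
  have "card (\<Union>c\<in>C. sub E (D c)) = (\<Sum>c\<in>C. card (sub E (D c)))"
  proof (rule card_UN_disjoint[OF finC])
    show "\<forall>c\<in>C. finite (sub E (D c))" using fin_sub finD by blast
    show "\<forall>c\<in>C. \<forall>c'\<in>C. c \<noteq> c' \<longrightarrow> sub E (D c) \<inter> sub E (D c') = {}"
    proof (intro ballI impI)
      fix c c' assume "c \<in> C" "c' \<in> C" "c \<noteq> c'"
      then have "D c \<inter> D c' = {}" using disj by blast
      then show "sub E (D c) \<inter> sub E (D c') = {}" unfolding sub_def by blast
    qed
  qed
  then show ?thesis using eq by simp
qed

lemma count_card: "card R = 1 + (\<Sum>c\<in>C. card (D c))"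
proof -
  have "card (\<Union>c\<in>C. D c) = (\<Sum>c\<in>C. card (D c))"
    using finD disj by (intro card_UN_disjoint[OF finC]) auto
  moreover have "finite (\<Union>c\<in>C. D c)" using finC finD by blast
  moreover have "x \<notin> (\<Union>c\<in>C. D c)" using xn by blast
  ultimately show ?thesis unfolding R by simp
qed

end


lemma A1_aux:
  assumes "finite C"
  shows "(\<forall>c\<in>C. f c \<ge> (1::nat) \<and> g c + 1 \<le> 2 * f c) \<longrightarrow>
         (card C \<ge> 1 \<longrightarrow> (\<Sum>c\<in>C. g c) + 3 \<le> 2 * (\<Prod>c\<in>C. 1 + f c)) \<and>
         (card C \<ge> 2 \<longrightarrow> (\<Sum>c\<in>C. g c) + 1 \<le> (\<Prod>c\<in>C. 1 + f c))"
  using assms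
proof (induction rule: finite_induct)
  case empty then show ?case by simp
next
  case (insert a F)
  show ?case
  proof
    assume h: "\<forall>c\<in>insert a F. f c \<ge> 1 \<and> g c + 1 \<le> 2 * f c"
    then have IH: "(card F \<ge> 1 \<longrightarrow> (\<Sum>c\<in>F. g c) + 3 \<le> 2 * (\<Prod>c\<in>F. 1 + f c)) \<and>
         (card F \<ge> 2 \<longrightarrow> (\<Sum>c\<in>F. g c) + 1 \<le> (\<Prod>c\<in>F. 1 + f c))" using insert.IH by blast
    have fa: "f a \<ge> 1" "g a + 1 \<le> 2 * f a" using h by auto
    define P where "P = (\<Prod>c\<in>F. 1 + f c)"
    define G where "G = (\<Sum>c\<in>F. g c)"
    have sums: "(\<Sum>c\<in>insert a F. g c) = g a + G" "(\<Prod>c\<in>insert a F. 1 + f c) = (1 + f a) * P"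
      unfolding P_def G_def using insert.hyps by auto
    have P1: "P \<ge> 1" unfolding P_def by (rule prod_ge_1) simp
    show "(card (insert a F) \<ge> 1 \<longrightarrow> (\<Sum>c\<in>insert a F. g c) + 3 \<le> 2 * (\<Prod>c\<in>insert a F. 1 + f c)) \<and>
         (card (insert a F) \<ge> 2 \<longrightarrow> (\<Sum>c\<in>insert a F. g c) + 1 \<le> (\<Prod>c\<in>insert a F. 1 + f c))"
    proof (cases "F = {}")
      case True
      then show ?thesis unfolding sums using fa by (simp add: P_def G_def)
    next
      case False
      then have cF: "card F \<ge> 1" using insert.hyps(1) by (simp add: Suc_le_eq card_gt_0_iff)
      have G3: "G + 3 \<le> 2 * P" using IH cF unfolding P_def G_def by blast
      obtain s where s: "f a = 1 + s" using fa(1) by (metis le_Suc_ex)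
      have "P \<ge> 2" using G3 by simp
      then obtain t where t: "P = 2 + t" by (metis le_Suc_ex add_2_eq_Suc)
      have A: "g a + G + 3 \<le> 2 * ((1 + f a) * P)"
        using fa(2) G3 unfolding s t by (simp add: algebra_simps)
      have B: "g a + G + 1 \<le> (1 + f a) * P"
        using fa(2) G3 unfolding s t by (simp add: algebra_simps)
      show ?thesis unfolding sums using A B by simp
    qed
  qed
qed

lemma A1:
  assumes "finite C" "card C \<noteq> 1" "\<forall>c\<in>C. f c \<ge> (1::nat)" "\<forall>c\<in>C. g c + 1 \<le> 2 * f c"
  shows "(\<Sum>c\<in>C. g c) + 1 \<le> (\<Prod>c\<in>C. 1 + f c)"
proof (cases "C = {}")
  case True then show ?thesis by simp
next
  case False
  then have "card C \<ge> 2" using assms(1,2) by (metis One_nat_def Suc_1 Suc_leI card_gt_0_iff le_neq_implies_less)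
  then show ?thesis using A1_aux[OF assms(1), of f g] assms(3,4) by blast
qed

lemma psum: "finite C \<Longrightarrow> (2::nat) ^ ((\<Sum>c\<in>C. m c) + card C) = (\<Prod>c\<in>C. 2 ^ (m c + 1))"
proof -
  assume fin: "finite C"
  have "(\<Sum>c\<in>C. m c + 1) = (\<Sum>c\<in>C. m c) + (\<Sum>c\<in>C. 1)" by (rule sum.distrib)
  then have "(\<Sum>c\<in>C. m c + 1) = (\<Sum>c\<in>C. m c) + card C" by simp
  then show ?thesis using power_sum[of "2::nat" "\<lambda>c. m c + 1" C] by simp
qed

lemma A3:
  assumes fin: "finite C" and c1: "card C \<noteq> 1" and h: "\<forall>c\<in>C. (2::nat) ^ (m c + 1) \<le> (r c + 1)^2"
  shows "(2::nat) ^ ((1 + (\<Sum>c\<in>C. m c)) + 1) \<le> ((\<Prod>c\<in>C. 1 + r c) + 1)^2"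
proof (cases "C = {}")
  case True then show ?thesis by (simp add: power2_eq_square)
next
  case False
  then have cC: "card C \<ge> 2" using fin c1 by (metis One_nat_def Suc_1 Suc_leI card_gt_0_iff le_neq_implies_less)
  have "(2::nat) ^ ((1 + (\<Sum>c\<in>C. m c)) + 1) = 2 ^ ((\<Sum>c\<in>C. m c) + 2)" by simp
  also have "\<dots> \<le> 2 ^ ((\<Sum>c\<in>C. m c) + card C)" using cC by (intro power_increasing) auto
  also have "\<dots> = (\<Prod>c\<in>C. 2 ^ (m c + 1))"
    using fin by (rule psum)
  also have "\<dots> \<le> (\<Prod>c\<in>C. (r c + 1)^2)" using h by (intro prod_mono) auto
  also have "\<dots> = (\<Prod>c\<in>C. 1 + r c)^2" by (simp add: prod_power_distrib add.commute)
  also have "\<dots> \<le> ((\<Prod>c\<in>C. 1 + r c) + 1)^2" by (intro power_mono) auto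
  finally show ?thesis .
qed

lemma A3v:
  assumes fin: "finite C" and h: "\<forall>c\<in>C. (2::nat) ^ (m c + 1) \<le> (r c + 1)^2"
  shows "(2::nat) ^ ((\<Sum>c\<in>C. m c) + card C) \<le> (\<Prod>c\<in>C. 1 + r c)^2"
proof -
  have "(2::nat) ^ ((\<Sum>c\<in>C. m c) + card C) = (\<Prod>c\<in>C. 2 ^ (m c + 1))"
    using fin by (rule psum)
  also have "\<dots> \<le> (\<Prod>c\<in>C. (r c + 1)^2)" using h by (intro prod_mono) auto
  also have "\<dots> = (\<Prod>c\<in>C. 1 + r c)^2" by (simp add: prod_power_distrib add.commute)
  finally show ?thesis .
qed

lemma N1: "n \<ge> 30 \<Longrightarrow> 8 * n^4 \<le> (2::nat) ^ (n - 1)"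
proof (induction n rule: dec_induct)
  case base then show ?case by simp
next
  case (step k)
  have h4: "30 \<le> k" using step(1) .
  have h3: "30 * k \<le> k * k" using h4 by (rule mult_le_mono1)
  have h2: "30 * (k * k) \<le> k * (k * k)" using h4 by (rule mult_le_mono1)
  have h1: "30 * (k * (k * k)) \<le> k * (k * (k * k))" using h4 by (rule mult_le_mono1)
  have e1: "(Suc k)^4 = k * (k * (k * k)) + 4 * (k * (k * k)) + 6 * (k * k) + 4 * k + 1"
    by (simp add: eval_nat_numeral algebra_simps)
  have e2: "k^4 = k * (k * (k * k))" by (simp add: eval_nat_numeral)
  have "(Suc k)^4 \<le> 2 * k^4" unfolding e1 e2 using h1 h2 h3 h4 by linarith
  then have "8 * (Suc k)^4 \<le> 2 * (8 * k^4)" by simp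
  also have "\<dots> \<le> 2 * 2 ^ (k - 1)" using step(3) by simp
  also have "\<dots> = 2 ^ (Suc k - 1)" using step(1) by (cases k) auto
  finally show ?case .
qed

lemma N2: "d^2 \<le> 2 * (2::nat) ^ d"
proof (induction d rule: nat_less_induct)
  case (1 d)
  show ?case
  proof (cases "d \<le> 3")
    case True
    then have "d = 0 \<or> d = 1 \<or> d = 2 \<or> d = 3" by auto
    then show ?thesis by auto
  next
    case False
    then obtain e where e: "d = Suc e" "e \<ge> 3" by (cases d) auto
    have "e^2 \<le> 2 * 2 ^ e" using 1 e by simp
    moreover have "(Suc e)^2 \<le> 2 * e^2"
    proof -
      have h: "3 * e \<le> e * e" using e(2) by (rule mult_le_mono1)
      have "(Suc e)^2 = e * e + 2 * e + 1" by (simp add: power2_eq_square)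
      moreover have "e^2 = e * e" by (simp add: power2_eq_square)
      ultimately show ?thesis using h e(2) by linarith
    qed
    ultimately show ?thesis using e(1) by simp
  qed
qed

lemma caseB:
  fixes n d a S :: nat
  assumes n: "n \<ge> 30" and a: "2 ^ (n - 1 + d) \<le> a^2" and S: "S \<le> d * (4 * n)"
  shows "n * S \<le> 2 * a"
proof -
  have "4 * n^4 * d^2 \<le> 4 * n^4 * (2 * 2^d)" using N2[of d] by simp
  also have "\<dots> = (8 * n^4) * 2^d" by simp
  also have "\<dots> \<le> 2^(n-1) * 2^d" using N1[OF n] by simp
  also have "\<dots> = 2^(n-1+d)" by (simp add: power_add)
  finally have c1: "4 * n^4 * d^2 \<le> a^2" using a by linarith
  have "(2 * n^2 * d)^2 = 4 * n^4 * d^2" by (simp add: power_mult_distrib flip: power_mult)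
  then have "(2 * n^2 * d)^2 \<le> a^2" using c1 by simp
  then have "2 * n^2 * d \<le> a" by (rule power2_le_imp_le) simp
  moreover have "n * S \<le> n * (d * (4 * n))" using S by simp
  moreover have "n * (d * (4 * n)) = 2 * (2 * n^2 * d)" by (simp add: power2_eq_square)
  ultimately show ?thesis by linarith
qed

lemma caseA:
  fixes n x y S :: nat
  assumes x: "x \<ge> 2 * n" and xy: "x \<le> y" and S: "S + 2 \<le> 2 * x + y"
  shows "n * S \<le> 2 * ((1 + x) * y)"
proof -
  have "n * S \<le> n * (2 * x + y)" using S by simp
  also have "\<dots> = 2 * (n * x) + n * y" by (simp add: algebra_simps)
  also have "\<dots> \<le> 2 * (n * y) + n * y" using xy by simp
  also have "\<dots> \<le> x * y + x * y"
  proof -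
    have "(2 * n) * y \<le> x * y" using x by (rule mult_le_mono1)
    then have "2 * (n * y) \<le> x * y" by (simp add: mult.assoc)
    then show ?thesis by linarith
  qed
  finally show ?thesis by (simp add: algebra_simps)
qed


lemma card_split: "finite A \<Longrightarrow> card A = card {x\<in>A. P x} + card {x\<in>A. \<not> P x}"
proof -
  assume fin: "finite A"
  have "A = {x\<in>A. P x} \<union> {x\<in>A. \<not> P x}" by blast
  moreover have "{x\<in>A. P x} \<inter> {x\<in>A. \<not> P x} = {}" by blast
  moreover have "finite {x\<in>A. P x}" "finite {x\<in>A. \<not> P x}" using fin by auto
  ultimately show ?thesis by (metis card_Un_disjoint)
qed

context tree
begin

definition rr where "rr b c = card {S \<in> sub E (Dset b c). c \<in> S}"
definition NN where "NN b c = card (sub E (Dset b c))"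
definition mm where "mm b c = card (Dset b c)"

lemma D2': "\<forall>c'\<in>nb c - {b}. \<forall>p\<in>Dset c c'. \<forall>q\<in>Dset b c. {p,q} \<in> E \<longrightarrow> q \<notin> Dset c c' \<longrightarrow> q = c \<and> p = c'"
proof (intro ballI impI)
  fix c' p q assume "c' \<in> nb c - {b}" "p \<in> Dset c c'" "q \<in> Dset b c" "{p,q} \<in> E" "q \<notin> Dset c c'"
  then show "q = c \<and> p = c'" using D2[of c c' p q] unfolding nb_def by blast
qed

lemma rec_decomp:
  assumes bc: "{b,c} \<in> E"
  shows "decomp E (nb c - {b}) (Dset b c) c (Dset c)"
proof
  show "finite (nb c - {b})" using fin_nb by blast
  show "Dset b c = insert c (\<Union>c'\<in>nb c - {b}. Dset c c')" using D5[OF bc] .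
  show "\<forall>c'\<in>nb c - {b}. c \<notin> Dset c c'"
  proof
    fix c' assume "c' \<in> nb c - {b}"
    then have "{c,c'} \<in> E" unfolding nb_def by simp
    then show "c \<notin> Dset c c'" using D1 by blast
  qed
  show "\<forall>c1\<in>nb c - {b}. \<forall>c2\<in>nb c - {b}. c1 \<noteq> c2 \<longrightarrow> Dset c c1 \<inter> Dset c c2 = {}"
  proof (intro ballI impI)
    fix c1 c2 assume "c1 \<in> nb c - {b}" "c2 \<in> nb c - {b}" "c1 \<noteq> c2"
    then show "Dset c c1 \<inter> Dset c c2 = {}" using D3[of c c1 c2] unfolding nb_def by blast
  qed
  show "\<forall>c'\<in>nb c - {b}. c' \<in> Dset c c'"
  proof
    fix c' assume "c' \<in> nb c - {b}"
    then have "{c,c'} \<in> E" unfolding nb_def by simp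
    then show "c' \<in> Dset c c'" using D1 by blast
  qed
  show "\<forall>c'\<in>nb c - {b}. {c, c'} \<in> E" unfolding nb_def by blast
  show "\<forall>c'\<in>nb c - {b}. induces_connected E (Dset c c')" using D6 by blast
  show "\<forall>c'\<in>nb c - {b}. \<forall>p\<in>Dset c c'. \<forall>q\<in>Dset b c. {p,q} \<in> E \<longrightarrow> q \<notin> Dset c c' \<longrightarrow> q = c \<and> p = c'"
    by (rule D2')
  show "\<forall>c'\<in>nb c - {b}. finite (Dset c c')" using finD by blast
qed

lemma vert_decomp:
  assumes v: "v \<in> V"
  shows "decomp E (nb v) V v (Dset v)"
proof
  show "finite (nb v)" using fin_nb by blast
  show "V = insert v (\<Union>u\<in>nb v. Dset v u)" using D4[OF v] .
  show "\<forall>u\<in>nb v. v \<notin> Dset v u"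
  proof
    fix u assume "u \<in> nb v"
    then have "{v,u} \<in> E" unfolding nb_def by simp
    then show "v \<notin> Dset v u" using D1 by blast
  qed
  show "\<forall>c1\<in>nb v. \<forall>c2\<in>nb v. c1 \<noteq> c2 \<longrightarrow> Dset v c1 \<inter> Dset v c2 = {}"
  proof (intro ballI impI)
    fix c1 c2 assume "c1 \<in> nb v" "c2 \<in> nb v" "c1 \<noteq> c2"
    then show "Dset v c1 \<inter> Dset v c2 = {}" using D3[of v c1 c2] unfolding nb_def by blast
  qed
  show "\<forall>u\<in>nb v. u \<in> Dset v u"
  proof
    fix u assume "u \<in> nb v"
    then have "{v,u} \<in> E" unfolding nb_def by simp
    then show "u \<in> Dset v u" using D1 by blast
  qed
  show "\<forall>u\<in>nb v. {v, u} \<in> E" unfolding nb_def by blast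
  show "\<forall>u\<in>nb v. induces_connected E (Dset v u)" using D6 by blast
  show "\<forall>u\<in>nb v. \<forall>p\<in>Dset v u. \<forall>q\<in>V. {p,q} \<in> E \<longrightarrow> q \<notin> Dset v u \<longrightarrow> q = v \<and> p = u"
  proof (intro ballI impI)
    fix u p q assume "u \<in> nb v" "p \<in> Dset v u" "q \<in> V" "{p,q} \<in> E" "q \<notin> Dset v u"
    then show "q = v \<and> p = u" using D2[of v u p q] unfolding nb_def by blast
  qed
  show "\<forall>u\<in>nb v. finite (Dset v u)" using finD by blast
qed

lemma recs:
  assumes bc: "{b,c} \<in> E"
  shows "rr b c = (\<Prod>c'\<in>nb c - {b}. 1 + rr c c')"
    and "NN b c = rr b c + (\<Sum>c'\<in>nb c - {b}. NN c c')"
    and "mm b c = 1 + (\<Sum>c'\<in>nb c - {b}. mm c c')"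
proof -
  interpret d: decomp E "nb c - {b}" "Dset b c" c "Dset c" using rec_decomp[OF bc] .
  show "rr b c = (\<Prod>c'\<in>nb c - {b}. 1 + rr c c')" unfolding rr_def using d.count_in .
  have "NN b c = card {S \<in> sub E (Dset b c). c \<in> S} + card {S \<in> sub E (Dset b c). c \<notin> S}"
    unfolding NN_def using fin_sub[OF finD] by (rule card_split)
  then show "NN b c = rr b c + (\<Sum>c'\<in>nb c - {b}. NN c c')" unfolding rr_def NN_def d.count_out .
  show "mm b c = 1 + (\<Sum>c'\<in>nb c - {b}. mm c c')" unfolding mm_def using d.count_card .
qed

lemma vrecs:
  assumes v: "v \<in> V"
  shows "alpha_v V E v = (\<Prod>u\<in>nb v. 1 + rr v u)"
    and "alpha_bar_v V E v = (\<Sum>u\<in>nb v. NN v u)"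
    and "card V = 1 + (\<Sum>u\<in>nb v. mm v u)"
proof -
  interpret d: decomp E "nb v" V v "Dset v" using vert_decomp[OF v] .
  have st: "subtrees V E = sub E V" unfolding subtrees_def sub_def by simp
  show "alpha_v V E v = (\<Prod>u\<in>nb v. 1 + rr v u)" unfolding alpha_v_def st rr_def using d.count_in .
  show "alpha_bar_v V E v = (\<Sum>u\<in>nb v. NN v u)" unfolding alpha_bar_v_def st NN_def using d.count_out .
  show "card V = 1 + (\<Sum>u\<in>nb v. mm v u)" unfolding mm_def using d.count_card .
qed

lemma rr_pos: assumes "{b,c} \<in> E" shows "rr b c \<ge> 1"
  unfolding recs(1)[OF assms] by (rule prod_ge_1) simp

lemma degree_nb: "degree E v = card (nb v)"
proof -
  have "bij_betw (\<lambda>u. {v,u}) (nb v) {e\<in>E. v \<in> e}"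
  proof (rule bij_betw_imageI)
    show "inj_on (\<lambda>u. {v,u}) (nb v)"
    proof (rule inj_onI)
      fix u u' assume "u \<in> nb v" "u' \<in> nb v" "{v,u} = {v,u'}"
      then show "u = u'" unfolding doubleton_eq_iff by blast
    qed
    show "(\<lambda>u. {v,u}) ` nb v = {e\<in>E. v \<in> e}"
    proof
      show "(\<lambda>u. {v,u}) ` nb v \<subseteq> {e\<in>E. v \<in> e}" unfolding nb_def by blast
      show "{e\<in>E. v \<in> e} \<subseteq> (\<lambda>u. {v,u}) ` nb v"
      proof
        fix e assume e: "e \<in> {e\<in>E. v \<in> e}"
        then obtain a b where ab: "e = {a,b}" "a \<noteq> b" using edgeE by blast
        then have "v = a \<or> v = b" using e by blast
        then show "e \<in> (\<lambda>u. {v,u}) ` nb v"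
        proof
          assume "v = a"
          then have "b \<in> nb v" "e = {v,b}" using e ab unfolding nb_def by auto
          then show ?thesis by blast
        next
          assume "v = b"
          then have "a \<in> nb v" "e = {v,a}" using e ab unfolding nb_def by (auto simp: insert_commute)
          then show ?thesis by blast
        qed
      qed
    qed
  qed
  then show ?thesis unfolding degree_def by (simp add: bij_betw_same_card)
qed

end

locale t3 = tree +
  assumes t3: "\<forall>v\<in>V. internal E v \<longrightarrow> degree E v \<ge> 3"
begin

lemma good: assumes bc: "{b,c} \<in> E" shows "card (nb c - {b}) \<noteq> 1"
proof -
  have bn: "b \<in> nb c" using bc unfolding nb_def by (simp add: insert_commute)
  have cV: "c \<in> V" using edge[OF bc] by simp
  have cd: "card (nb c - {b}) = card (nb c) - 1" using bn fin_nb by (simp add: card_Diff_singleton)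
  show ?thesis
  proof (cases "internal E c")
    case True
    then have "card (nb c) \<ge> 3" using t3 cV degree_nb by metis
    then show ?thesis using cd by simp
  next
    case False
    then have "card (nb c) < 2" using degree_nb unfolding internal_def by simp
    then show ?thesis using cd by simp
  qed
qed

lemma props:
  assumes "{b,c} \<in> E"
  shows "NN b c + 1 \<le> 2 * rr b c \<and> (2::nat) ^ (mm b c + 1) \<le> (rr b c + 1)^2"
  using assms
proof (induction "mm b c" arbitrary: b c rule: less_induct)
  case less
  let ?C = "nb c - {b}"
  have ch: "{c,c'} \<in> E" if "c' \<in> ?C" for c' using that unfolding nb_def by simp
  have smaller: "mm c c' < mm b c" if "c' \<in> ?C" for c'
  proof -
    have "mm c c' \<le> (\<Sum>c'\<in>?C. mm c c')" using that fin_nb by (intro member_le_sum) auto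
    then show ?thesis using recs(3)[OF less.prems] by simp
  qed
  have IH: "NN c c' + 1 \<le> 2 * rr c c' \<and> (2::nat) ^ (mm c c' + 1) \<le> (rr c c' + 1)^2" if "c' \<in> ?C" for c'
    using less.hyps[OF smaller[OF that] ch[OF that]] .
  have finC: "finite ?C" using fin_nb by blast
  have g: "card ?C \<noteq> 1" using good[OF less.prems] .
  have a1: "(\<Sum>c'\<in>?C. NN c c') + 1 \<le> (\<Prod>c'\<in>?C. 1 + rr c c')"
    using A1[OF finC g] rr_pos ch IH by blast
  have a3: "(2::nat) ^ ((1 + (\<Sum>c'\<in>?C. mm c c')) + 1) \<le> ((\<Prod>c'\<in>?C. 1 + rr c c') + 1)^2"
    using A3[OF finC g] IH by blast
  show ?case
  proof
    show "NN b c + 1 \<le> 2 * rr b c" using a1 recs(1,2)[OF less.prems] by simp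
    show "(2::nat) ^ (mm b c + 1) \<le> (rr b c + 1)^2" using a3 recs(1,3)[OF less.prems] by simp
  qed
qed

end


theorem mainTheorem10:
  fixes V :: "'a set" and E :: "'a set set"
  assumes "in_T3 V E"
    and "card V \<ge> 30"
  shows "(\<exists>e\<in>E. 2 * alpha_e V E e \<ge> card V * alpha_bar_e V E e)
         \<or> (\<exists>v\<in>V. internal E v \<and> 2 * alpha_v V E v \<ge> card V * alpha_bar_v V E v)"
proof -
  interpret t3 V E
  proof
    show "is_tree V E" using assms(1) unfolding in_T3_def by blast
    show "\<forall>v\<in>V. internal E v \<longrightarrow> 3 \<le> degree E v" using assms(1) unfolding in_T3_def by blast
  qed
  define n where "n = card V"
  have n30: "n \<ge> 30" using assms(2) unfolding n_def .
  define I where "I = {v\<in>V. internal E v}"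
  have finI: "finite I" unfolding I_def using finV by simp
  have neI: "I \<noteq> {}" using assms(1) unfolding in_T3_def I_def by blast
  define M where "M = Max (alpha_v V E ` I)"
  have "M \<in> alpha_v V E ` I" unfolding M_def using finI neI by simp
  then obtain v where vI: "v \<in> I" and vM: "alpha_v V E v = M" by blast
  have vmax: "alpha_v V E w \<le> alpha_v V E v" if "w \<in> I" for w
    unfolding vM M_def using finI that by simp
  have vV: "v \<in> V" and vint: "internal E v" using vI unfolding I_def by auto
  define d where "d = card (nb v)"
  have d3: "d \<ge> 3" unfolding d_def using t3 vV vint degree_nb by metis
  have nbE: "{v,u} \<in> E" if "u \<in> nb v" for u using that unfolding nb_def by simp
  have av: "alpha_v V E v = (\<Prod>u\<in>nb v. 1 + rr v u)" using vrecs(1)[OF vV] .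
  have abv: "alpha_bar_v V E v = (\<Sum>u\<in>nb v. NN v u)" using vrecs(2)[OF vV] .
  have nsum: "n = 1 + (\<Sum>u\<in>nb v. mm v u)" unfolding n_def using vrecs(3)[OF vV] .
  have P: "NN v u + 1 \<le> 2 * rr v u \<and> (2::nat) ^ (mm v u + 1) \<le> (rr v u + 1)^2" if "u \<in> nb v" for u
    using props[OF nbE[OF that]] .
  have "n * alpha_bar_v V E v \<le> 2 * alpha_v V E v"
  proof (cases "\<exists>u\<in>nb v. rr v u \<ge> 2 * n")
    case True
    then obtain u where u: "u \<in> nb v" and xbig: "rr v u \<ge> 2 * n" by blast
    define x where "x = rr v u"
    define C' where "C' = nb v - {u}"
    define y where "y = (\<Prod>w\<in>C'. 1 + rr v w)"
    have uv: "{u,v} \<in> E" using nbE[OF u] by (simp add: insert_commute)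
    have uV: "u \<in> V" using edge(1)[OF uv] .
    have vu_nb: "v \<in> nb u" using uv unfolding nb_def by simp
    have pr: "(\<Prod>w\<in>nb v. 1 + rr v w) = (1 + rr v u) * (\<Prod>w\<in>nb v - {u}. 1 + rr v w)"
      by (rule prod.remove[OF fin_nb u])
    have av2: "alpha_v V E v = (1 + x) * y"
      unfolding av x_def y_def C'_def pr ..
    have ruv: "rr u v = y" unfolding y_def C'_def using recs(1)[OF uv] .
    have rvu: "x = (\<Prod>w\<in>nb u - {v}. 1 + rr u w)" unfolding x_def using recs(1)[OF nbE[OF u]] .
    have pr2: "(\<Prod>w\<in>nb u. 1 + rr u w) = (1 + rr u v) * (\<Prod>w\<in>nb u - {v}. 1 + rr u w)"
      by (rule prod.remove[OF fin_nb vu_nb])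
    have au: "alpha_v V E u = (1 + y) * x"
      unfolding vrecs(1)[OF uV] rvu pr2 ruv ..
    have uint: "internal E u"
    proof (rule ccontr)
      assume "\<not> internal E u"
      then have "card (nb u) < 2" using degree_nb unfolding internal_def by simp
      moreover have "card (nb u) \<ge> 1"
      proof -
        have "card (nb u) > 0" using fin_nb[of u] vu_nb card_gt_0_iff by blast
        then show ?thesis by simp
      qed
      ultimately have "card (nb u) = 1" by simp
      then have "nb u = {v}" using vu_nb by (metis card_1_singletonE singletonD)
      then have "x = 1" using rvu by simp
      then show False using xbig n30 unfolding x_def by simp
    qed
    have "alpha_v V E u \<le> alpha_v V E v" using vmax uV uint unfolding I_def by blast
    then have "(1 + y) * x \<le> (1 + x) * y" using au av2 by simp
    then have xy: "x \<le> y" by (simp add: algebra_simps)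
    have ab2: "alpha_bar_v V E v = NN v u + (\<Sum>w\<in>C'. NN v w)"
      unfolding abv C'_def using sum.remove[OF fin_nb u] by simp
    have n1: "NN v u + 1 \<le> 2 * x" using P[OF u] unfolding x_def by simp
    have finC': "finite C'" unfolding C'_def using fin_nb by simp
    have cC': "card C' \<noteq> 1" unfolding C'_def using d3 u fin_nb unfolding d_def by (simp add: card_Diff_singleton)
    have n2: "(\<Sum>w\<in>C'. NN v w) + 1 \<le> y"
      unfolding y_def using A1[OF finC' cC'] rr_pos nbE P unfolding C'_def by blast
    have "alpha_bar_v V E v + 2 \<le> 2 * x + y" using ab2 n1 n2 by simp
    then have "n * alpha_bar_v V E v \<le> 2 * ((1 + x) * y)"
      using caseA[of n x y] xbig xy unfolding x_def by blast
    then show ?thesis using av2 by simp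
  next
    case False
    then have small: "rr v u < 2 * n" if "u \<in> nb v" for u using that by (simp add: not_le)
    have "NN v u \<le> 4 * n" if "u \<in> nb v" for u using P[OF that] small[OF that] by simp
    then have "(\<Sum>u\<in>nb v. NN v u) \<le> of_nat (card (nb v)) * (4 * n)" by (rule sum_bounded_above)
    then have "(\<Sum>u\<in>nb v. NN v u) \<le> card (nb v) * (4 * n)" by simp
    then have S: "alpha_bar_v V E v \<le> d * (4 * n)" unfolding abv d_def .
    have "(2::nat) ^ ((\<Sum>u\<in>nb v. mm v u) + card (nb v)) \<le> (\<Prod>u\<in>nb v. 1 + rr v u)^2"
      using A3v[OF fin_nb] P by blast
    then have a: "2 ^ (n - 1 + d) \<le> (alpha_v V E v)^2" unfolding av d_def nsum by simp
    show ?thesis using caseB[OF n30 a S] .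
  qed
  then have "2 * alpha_v V E v \<ge> card V * alpha_bar_v V E v" unfolding n_def by simp
  then show ?thesis using vV vint by blast
qed


end
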